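(* Any sequential component with interface $(N,I,O)$ is distributed, i.e. the net $N$ is distributed.
   Context: A Petri net $N=(S,T,F,M_0,\ell)$ has disjoint $S,T$, $F:(S\times T)\cup(T\times S)\to\mathbb N$, $M_0\in\mathbb N^S$, labels $\ell$. ${}^\bullet x(y)=F(y,x)$, $x^\bullet(y)=F(x,y)$ (multisets). For a finite nonempty multiset $G$ of transitions, $M[G\rangle M'$ iff ${}^\bullet G\le M$ and $M'=M-{}^\bullet G+G^\bullet$; reachable markings are those obtained from $M_0$ by steps; $t\smile u$ iff $M[\{t\}+\{u\}\rangle$ for some reachable $M$. A component with interface is $(N,I,O)$ with $I,O\subseteq S$, $I\cap O=\emptyset$, and $o^\bullet=\emptyset$ for all $o\in O$. It is sequential iff there is $Q\subseteq S\setminus(I\cup O)$ such that every $t\in T$ satisfies $|{}^\bullet t\restriction Q|=1$ and $|t^\bullet\restriction Q|=1$, and $|M_0\restriction Q|=1$ (sizes counted with multiplicity). $N$ is distributed iff there is a function $D$ on $S\cup T$ with (1) $s\in{}^\bullet t\Rightarrow D(t)=D(s)$ and (2) $t\smile u\Rightarrow D(t)\ne D(u)$. *)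

theory Defs
  imports Main "HOL-Library.Multiset"
begin

text \<open>A Petri net (S,T,F,M0,l) over a common node type 'a (places and transitions
are disjoint subsets of 'a).\<close>

definition petri_net ::
  "'a set \<Rightarrow> 'a set \<Rightarrow> ('a \<Rightarrow> 'a \<Rightarrow> nat) \<Rightarrow> ('a \<Rightarrow> nat) \<Rightarrow> ('a \<Rightarrow> 'l) \<Rightarrow> bool" where
  "petri_net S T F M0 l \<longleftrightarrow>
     S \<inter> T = {} \<and>
     (\<forall>x y. F x y \<noteq> 0 \<longrightarrow> (x \<in> S \<and> y \<in> T) \<or> (x \<in> T \<and> y \<in> S)) \<and>
     (\<forall>s. M0 s \<noteq> 0 \<longrightarrow> s \<in> S)"

definition preset_ms :: "('a \<Rightarrow> 'a \<Rightarrow> nat) \<Rightarrow> 'a multiset \<Rightarrow> 'a \<Rightarrow> nat" where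
  "preset_ms F G = (\<lambda>s. \<Sum>t\<in>set_mset G. count G t * F s t)"

definition postset_ms :: "('a \<Rightarrow> 'a \<Rightarrow> nat) \<Rightarrow> 'a multiset \<Rightarrow> 'a \<Rightarrow> nat" where
  "postset_ms F G = (\<lambda>s. \<Sum>t\<in>set_mset G. count G t * F t s)"

definition fires ::
  "'a set \<Rightarrow> ('a \<Rightarrow> 'a \<Rightarrow> nat) \<Rightarrow> ('a \<Rightarrow> nat) \<Rightarrow> 'a multiset \<Rightarrow> ('a \<Rightarrow> nat) \<Rightarrow> bool" where
  "fires T F M G M' \<longleftrightarrow>
     G \<noteq> {#} \<and> set_mset G \<subseteq> T \<and>
     (\<forall>s. preset_ms F G s \<le> M s) \<and>
     M' = (\<lambda>s. M s - preset_ms F G s + postset_ms F G s)"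

inductive reachable ::
  "'a set \<Rightarrow> ('a \<Rightarrow> 'a \<Rightarrow> nat) \<Rightarrow> ('a \<Rightarrow> nat) \<Rightarrow> ('a \<Rightarrow> nat) \<Rightarrow> bool"
  for T F M0 where
  init: "reachable T F M0 M0"
| step: "reachable T F M0 M \<Longrightarrow> fires T F M G M' \<Longrightarrow> reachable T F M0 M'"

definition concurrent ::
  "'a set \<Rightarrow> ('a \<Rightarrow> 'a \<Rightarrow> nat) \<Rightarrow> ('a \<Rightarrow> nat) \<Rightarrow> 'a \<Rightarrow> 'a \<Rightarrow> bool" where
  "concurrent T F M0 t u \<longleftrightarrow>
     (\<exists>M M'. reachable T F M0 M \<and> fires T F M ({#t#} + {#u#}) M')"

definition component_with_interface ::
  "'a set \<Rightarrow> 'a set \<Rightarrow> ('a \<Rightarrow> 'a \<Rightarrow> nat) \<Rightarrow> ('a \<Rightarrow> nat) \<Rightarrow> ('a \<Rightarrow> 'l)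
    \<Rightarrow> 'a set \<Rightarrow> 'a set \<Rightarrow> bool" where
  "component_with_interface S T F M0 l Inp Out \<longleftrightarrow>
     petri_net S T F M0 l \<and> Inp \<subseteq> S \<and> Out \<subseteq> S \<and> Inp \<inter> Out = {} \<and>
     (\<forall>p\<in>Out. \<forall>y. F p y = 0)"

text \<open>|m restricted to Q| = 1 (size with multiplicity) for m : 'a \<Rightarrow> nat.\<close>
definition size_one_on :: "'a set \<Rightarrow> ('a \<Rightarrow> nat) \<Rightarrow> bool" where
  "size_one_on Q m \<longleftrightarrow> (\<exists>q\<in>Q. m q = 1 \<and> (\<forall>q'\<in>Q. q' \<noteq> q \<longrightarrow> m q' = 0))"

definition sequential ::
  "'a set \<Rightarrow> 'a set \<Rightarrow> ('a \<Rightarrow> 'a \<Rightarrow> nat) \<Rightarrow> ('a \<Rightarrow> nat) \<Rightarrow> ('a \<Rightarrow> 'l)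
    \<Rightarrow> 'a set \<Rightarrow> 'a set \<Rightarrow> bool" where
  "sequential S T F M0 l Inp Out \<longleftrightarrow>
     component_with_interface S T F M0 l Inp Out \<and>
     (\<exists>Q. Q \<subseteq> S - (Inp \<union> Out) \<and>
          (\<forall>t\<in>T. size_one_on Q (\<lambda>s. F s t) \<and> size_one_on Q (\<lambda>s. F t s)) \<and>
          size_one_on Q M0)"

text \<open>Distributed: some D on S \<union> T (values taken in 'a, which is no loss of
generality since the image of S \<union> T injects into 'a).\<close>
definition distributed ::
  "'a set \<Rightarrow> 'a set \<Rightarrow> ('a \<Rightarrow> 'a \<Rightarrow> nat) \<Rightarrow> ('a \<Rightarrow> nat) \<Rightarrow> ('a \<Rightarrow> 'l) \<Rightarrow> bool" where
  "distributed S T F M0 l \<longleftrightarrow>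
     (\<exists>D :: 'a \<Rightarrow> 'a.
        (\<forall>t\<in>T. \<forall>s\<in>S. F s t \<noteq> 0 \<longrightarrow> D t = D s) \<and>
        (\<forall>t\<in>T. \<forall>u\<in>T. concurrent T F M0 t u \<longrightarrow> D t \<noteq> D u))"

end

theory Submission
  imports Defs
begin

lemma pre_ge_term:
  assumes "t \<in># G"
  shows "count G t * F s t \<le> preset_ms F G s"
  unfolding preset_ms_def
  by (rule member_le_sum) (use assms in auto)

lemma pre_ge_two:
  assumes "t \<in># G" "u \<in># G" "t \<noteq> u"
  shows "count G t * F s t + count G u * F s u \<le> preset_ms F G s"
proof -
  have "(\<Sum>x\<in>{t,u}. count G x * F s x) \<le> (\<Sum>x\<in>set_mset G. count G x * F s x)"
    by (rule sum_mono2) (use assms in auto)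
  then show ?thesis using assms unfolding preset_ms_def by simp
qed

lemma place_of:
  assumes hQ: "\<forall>t\<in>T. size_one_on Q (\<lambda>s. F s t)"
    and M: "q \<in> Q" "M q = 1" "\<forall>q'\<in>Q. q' \<noteq> q \<longrightarrow> M q' = 0"
    and f: "\<forall>s. preset_ms F G s \<le> M s" "set_mset G \<subseteq> T" and t: "t \<in># G"
  shows "F q t = 1 \<and> (\<forall>q'\<in>Q. q' \<noteq> q \<longrightarrow> F q' t = 0)"
proof -
  from hQ t f(2) obtain p where p: "p \<in> Q" "F p t = 1" "\<forall>q'\<in>Q. q' \<noteq> p \<longrightarrow> F q' t = 0"
    unfolding size_one_on_def by blast
  have "count G t * F p t \<le> M p" using pre_ge_term[OF t, of F p] f(1)[rule_format, of p] by linarith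
  moreover have "count G t > 0" using t by simp
  ultimately have "M p \<noteq> 0" using p by (metis mult_1_right not_gr_zero le_zero_eq)
  with M p have "p = q" by metis
  with p show ?thesis by blast
qed

lemma no_two:
  assumes hQ: "\<forall>t\<in>T. size_one_on Q (\<lambda>s. F s t)"
    and M: "q \<in> Q" "M q = 1" "\<forall>q'\<in>Q. q' \<noteq> q \<longrightarrow> M q' = 0"
    and f: "\<forall>s. preset_ms F G s \<le> M s" "set_mset G \<subseteq> T"
    and t: "t \<in># G" and u: "u \<in># G"
    and two: "t \<noteq> u \<or> count G t \<ge> 2"
  shows False
proof -
  have ft: "F q t = 1" using place_of[OF hQ M f t] by blast
  have fu: "F q u = 1" using place_of[OF hQ M f u] by blast
  have "2 \<le> preset_ms F G q"
  proof (cases "t = u")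
    case True
    then have "count G t \<ge> 2" using two by simp
    then show ?thesis using pre_ge_term[OF t, of F q] ft by simp
  next
    case False
    have "count G t \<ge> 1" "count G u \<ge> 1" using t u by auto
    moreover have "count G t * F q t + count G u * F q u \<le> preset_ms F G q" by (rule pre_ge_two[OF t u False])
    ultimately have "count G t + count G u \<le> preset_ms F G q" using ft fu by simp
    moreover have "count G t > 0" "count G u > 0" using t u by auto
    ultimately show ?thesis by linarith
  qed
  with f(1) M(2) show False by (metis numeral_le_one_iff semiring_norm(69) order_trans)
qed

lemma inv:
  assumes hQ: "\<forall>t\<in>T. size_one_on Q (\<lambda>s. F s t) \<and> size_one_on Q (\<lambda>s. F t s)"
    and r: "reachable T F M0 M" and m0: "size_one_on Q M0"
  shows "size_one_on Q M"
  using r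
proof induction
  case init then show ?case using m0 .
next
  case (step M G M')
  from step.IH obtain q where M: "q \<in> Q" "M q = 1" "\<forall>q'\<in>Q. q' \<noteq> q \<longrightarrow> M q' = 0"
    unfolding size_one_on_def by blast
  have hQ1: "\<forall>t\<in>T. size_one_on Q (\<lambda>s. F s t)" using hQ by blast
  from step.hyps(2) have ne: "G \<noteq> {#}" and f: "\<forall>s. preset_ms F G s \<le> M s" "set_mset G \<subseteq> T"
    and M': "M' = (\<lambda>s. M s - preset_ms F G s + postset_ms F G s)"
    unfolding fires_def by auto
  obtain t where t: "t \<in># G" using ne by (meson multiset_nonemptyE)
  have G: "G = {#t#}"
  proof (rule ccontr)
    assume "G \<noteq> {#t#}"
    then obtain u where u: "u \<in># G" and two: "t \<noteq> u \<or> count G t \<ge> 2"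
    proof -
      assume h: "\<And>u. u \<in># G \<Longrightarrow> t \<noteq> u \<or> 2 \<le> count G t \<Longrightarrow> thesis"
      show thesis
      proof (cases "count G t \<ge> 2")
        case True then show ?thesis using h t by blast
      next
        case False
        then have c: "count G t = 1" using t by (metis One_nat_def Suc_1 count_greater_zero_iff less_Suc_eq_0_disj not_le_imp_less not_less_eq)
        have "G - {#t#} \<noteq> {#}"
        proof
          assume "G - {#t#} = {#}"
          then have "G = {#t#}" using t by (metis add_diff_cancel_left' insert_DiffM)
          with \<open>G \<noteq> {#t#}\<close> show False by simp
        qed
        then obtain u where "u \<in># G - {#t#}" by (meson multiset_nonemptyE)
        then have "u \<in># G" "u \<noteq> t" using c
          by (auto dest: in_diffD) (metis c count_diff count_single diff_self_eq_0 diff_zero in_diff_count less_numeral_extra(3))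
        then show ?thesis using h by blast
      qed
    qed
    show False using no_two[OF hQ1 M f t u two] .
  qed
  have tT: "t \<in> T" using t f(2) by blast
  have pl: "F q t = 1 \<and> (\<forall>q'\<in>Q. q' \<noteq> q \<longrightarrow> F q' t = 0)" using place_of[OF hQ1 M f t] .
  have pre: "preset_ms F G = (\<lambda>s. F s t)" "postset_ms F G = (\<lambda>s. F t s)"
    unfolding G preset_ms_def postset_ms_def by auto
  have "\<forall>s\<in>Q. M' s = F t s"
    using M pl unfolding M' pre by auto
  moreover have "size_one_on Q (\<lambda>s. F t s)" using hQ tT by blast
  ultimately show ?case unfolding size_one_on_def by auto
qed

theorem lemma4p11:
  fixes S T Inp Out :: "'a set" and F :: "'a \<Rightarrow> 'a \<Rightarrow> nat"
    and M0 :: "'a \<Rightarrow> nat" and l :: "'a \<Rightarrow> 'l"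
  assumes "sequential S T F M0 l Inp Out"
  shows "distributed S T F M0 l"
proof -
  from assms obtain Q where hQ: "\<forall>t\<in>T. size_one_on Q (\<lambda>s. F s t) \<and> size_one_on Q (\<lambda>s. F t s)"
    and m0: "size_one_on Q M0" unfolding sequential_def by blast
  have hQ1: "\<forall>t\<in>T. size_one_on Q (\<lambda>s. F s t)" using hQ by blast
  have nc: "\<not> concurrent T F M0 t u" for t u
  proof
    assume "concurrent T F M0 t u"
    then obtain M M' where r: "reachable T F M0 M" and fi: "fires T F M ({#t#} + {#u#}) M'"
      unfolding concurrent_def by blast
    from inv[OF hQ r m0] obtain q where M: "q \<in> Q" "M q = 1" "\<forall>q'\<in>Q. q' \<noteq> q \<longrightarrow> M q' = 0"
      unfolding size_one_on_def by blast
    from fi have f: "\<forall>s. preset_ms F ({#t#} + {#u#}) s \<le> M s" "set_mset ({#t#} + {#u#}) \<subseteq> T"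
      unfolding fires_def by auto
    show False
      by (rule no_two[OF hQ1 M f, of t u]) auto
  qed
  show ?thesis unfolding distributed_def
    by (rule exI[of _ "\<lambda>_. undefined"]) (simp add: nc)
qed

end
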